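(* Order each hom-set $\mathbf{qPOS}((\mathcal X,R),(\mathcal Y,S))$ by $F\sqsubseteq G$ iff $G\le S\circ F$. Then this is a partial order on each hom-set, and composition is monotone in both arguments: if $F,F':(\mathcal X,R)\to(\mathcal Y,S)$ and $G,G':(\mathcal Y,S)\to(\mathcal Z,T)$ are monotone functions with $F\sqsubseteq F'$ and $G\sqsubseteq G'$, then $G\circ F\sqsubseteq G'\circ F'$. Thus $\mathbf{qPOS}$ is enriched over the category of posets.
   Context: A quantum set $\mathcal X$ is a set $\mathrm{At}(\mathcal X)$ of nonzero finite-dimensional Hilbert spaces (atoms). A relation $R$ from $\mathcal X$ to $\mathcal Y$ is a choice of subspaces $R(X,Y)\subseteq L(X,Y)$ for all atoms $X\in\mathrm{At}(\mathcal X)$, $Y\in\mathrm{At}(\mathcal Y)$. Composition: $(S\circ R)(X,Z)=\mathrm{span}\{sr: r\in R(X,Y), s\in S(Y,Z), Y\in\mathrm{At}(\mathcal Y)\}$; identity $I_{\mathcal X}(X,X)=\mathbb C 1_X$, $I_{\mathcal X}(X,X')=0$ for $X\neq X'$; adjoint $R^\dagger(Y,X)=\{r^\dagger: r\in R(X,Y)\}$; $R\le S$ iff $R(X,Y)\subseteq S(X,Y)$ for all atoms; $\wedge$ is entrywise intersection. A function $F:\mathcal X\to\mathcal Y$ is a relation with $F\circ F^\dagger\le I_{\mathcal Y}$ and $F^\dagger\circ F\ge I_{\mathcal X}$. A quantum poset is $(\mathcal X,R)$ with $I_{\mathcal X}\le R$, $R\circ R\le R$, $R\wedge R^\dagger\le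 I_{\mathcal X}$. A monotone map $F:(\mathcal X,R)\to(\mathcal Y,S)$ is a function $F:\mathcal X\to\mathcal Y$ with $F\circ R\le S\circ F$. $\mathbf{qPOS}$ is the category of quantum posets and monotone maps. *)

theory Defs
  imports "Jordan_Normal_Form.Schur_Decomposition"
begin

text \<open>A quantum set: a set of atom labels together with the dimension of each atom.
  The atom labelled a is the Hilbert space complex^(qdim X a); linear maps between
  atoms are complex matrices of the appropriate size.\<close>

record 'a qset =
  At :: "'a set"
  qdim :: "'a \<Rightarrow> nat"

definition qset_wf :: "'a qset \<Rightarrow> bool" where
  "qset_wf X \<longleftrightarrow> (\<forall>a\<in>At X. 0 < qdim X a)"

type_synonym ('a,'b) qrel = "'a \<Rightarrow> 'b \<Rightarrow> complex mat set"

definition msubspace :: "nat \<Rightarrow> nat \<Rightarrow> complex mat set \<Rightarrow> bool" where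
  "msubspace n m V \<longleftrightarrow> V \<subseteq> carrier_mat n m \<and> 0\<^sub>m n m \<in> V
     \<and> (\<forall>u\<in>V. \<forall>v\<in>V. u + v \<in> V) \<and> (\<forall>c. \<forall>u\<in>V. c \<cdot>\<^sub>m u \<in> V)"

inductive_set mspan :: "nat \<Rightarrow> nat \<Rightarrow> complex mat set \<Rightarrow> complex mat set"
  for n m A where
  zero: "0\<^sub>m n m \<in> mspan n m A"
| smult: "a \<in> A \<Longrightarrow> c \<cdot>\<^sub>m a \<in> mspan n m A"
| add: "u \<in> mspan n m A \<Longrightarrow> v \<in> mspan n m A \<Longrightarrow> u + v \<in> mspan n m A"

definition is_qrel :: "'a qset \<Rightarrow> 'b qset \<Rightarrow> ('a,'b) qrel \<Rightarrow> bool" where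
  "is_qrel X Y R \<longleftrightarrow> (\<forall>x\<in>At X. \<forall>y\<in>At Y. msubspace (qdim Y y) (qdim X x) (R x y))"

definition qcomp :: "'a qset \<Rightarrow> 'b qset \<Rightarrow> 'c qset \<Rightarrow> ('b,'c) qrel \<Rightarrow> ('a,'b) qrel \<Rightarrow> ('a,'c) qrel" where
  "qcomp X Y Z S R = (\<lambda>x z. mspan (qdim Z z) (qdim X x)
      {s * r | s r y. y \<in> At Y \<and> r \<in> R x y \<and> s \<in> S y z})"

definition qid :: "'a qset \<Rightarrow> ('a,'a) qrel" where
  "qid X = (\<lambda>x x'. if x = x' then {c \<cdot>\<^sub>m 1\<^sub>m (qdim X x) | c. True} else {0\<^sub>m (qdim X x') (qdim X x)})"

definition qadj :: "('a,'b) qrel \<Rightarrow> ('b,'a) qrel" where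
  "qadj R = (\<lambda>y x. mat_adjoint ` R x y)"

definition qle :: "'a qset \<Rightarrow> 'b qset \<Rightarrow> ('a,'b) qrel \<Rightarrow> ('a,'b) qrel \<Rightarrow> bool" where
  "qle X Y R S \<longleftrightarrow> (\<forall>x\<in>At X. \<forall>y\<in>At Y. R x y \<subseteq> S x y)"

definition qeq :: "'a qset \<Rightarrow> 'b qset \<Rightarrow> ('a,'b) qrel \<Rightarrow> ('a,'b) qrel \<Rightarrow> bool" where
  "qeq X Y R S \<longleftrightarrow> (\<forall>x\<in>At X. \<forall>y\<in>At Y. R x y = S x y)"

definition qmeet :: "('a,'b) qrel \<Rightarrow> ('a,'b) qrel \<Rightarrow> ('a,'b) qrel" where
  "qmeet R S = (\<lambda>x y. R x y \<inter> S x y)"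

definition qfun :: "'a qset \<Rightarrow> 'b qset \<Rightarrow> ('a,'b) qrel \<Rightarrow> bool" where
  "qfun X Y F \<longleftrightarrow> is_qrel X Y F
     \<and> qle Y Y (qcomp Y X Y F (qadj F)) (qid Y)
     \<and> qle X X (qid X) (qcomp X Y X (qadj F) F)"

definition qposet :: "'a qset \<Rightarrow> ('a,'a) qrel \<Rightarrow> bool" where
  "qposet X R \<longleftrightarrow> qset_wf X \<and> is_qrel X X R
     \<and> qle X X (qid X) R
     \<and> qle X X (qcomp X X X R R) R
     \<and> qle X X (qmeet R (qadj R)) (qid X)"

definition qmono :: "'a qset \<Rightarrow> ('a,'a) qrel \<Rightarrow> 'b qset \<Rightarrow> ('b,'b) qrel \<Rightarrow> ('a,'b) qrel \<Rightarrow> bool" where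
  "qmono X R Y S F \<longleftrightarrow> qfun X Y F \<and> qle X Y (qcomp X X Y F R) (qcomp X Y Y S F)"

definition qhom_le :: "'a qset \<Rightarrow> 'b qset \<Rightarrow> ('b,'b) qrel \<Rightarrow> ('a,'b) qrel \<Rightarrow> ('a,'b) qrel \<Rightarrow> bool" where
  "qhom_le X Y S F G \<longleftrightarrow> qle X Y G (qcomp X Y Y S F)"

end

theory Submission
  imports Defs
begin

lemma adj_dims[simp]: "dim_row (mat_adjoint A) = dim_col A" "dim_col (mat_adjoint A) = dim_row A"
  by (auto simp: mat_adjoint_def)

lemma adj_index[simp]: "i < dim_col A \<Longrightarrow> j < dim_row A \<Longrightarrow> mat_adjoint A $$ (i,j) = conjugate (A $$ (j,i))"
  by (auto simp: mat_adjoint_def mat_of_rows_index)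

lemma adj_carrier: "A \<in> carrier_mat n m \<Longrightarrow> mat_adjoint A \<in> carrier_mat m n"
  by auto

lemma adj_adj[simp]: "mat_adjoint (mat_adjoint A) = A"
  by (rule eq_matI) auto

lemma adj_zero[simp]: "mat_adjoint (0\<^sub>m n m :: complex mat) = 0\<^sub>m m n"
  by (rule eq_matI) auto

lemma adj_smult: "mat_adjoint (c \<cdot>\<^sub>m (A::complex mat)) = conjugate c \<cdot>\<^sub>m mat_adjoint A"
  by (rule eq_matI) auto

lemma adj_add: "A \<in> carrier_mat n m \<Longrightarrow> B \<in> carrier_mat n m \<Longrightarrow> mat_adjoint (A + B :: complex mat) = mat_adjoint A + mat_adjoint B"
  by (rule eq_matI) auto

lemma adj_mult: "(A::complex mat) \<in> carrier_mat n k \<Longrightarrow> B \<in> carrier_mat k m \<Longrightarrow> mat_adjoint (A * B) = mat_adjoint B * mat_adjoint A"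
  apply (rule eq_matI)
    apply (auto simp: scalar_prod_def)
  apply (simp add: conjugate_complex_def cnj_sum mult.commute)
  done

lemma smult_one_gen[simp]: "(1::complex) \<cdot>\<^sub>m A = A"
  by (rule eq_matI) auto

lemma mspan_carrier: "A \<subseteq> carrier_mat n m \<Longrightarrow> u \<in> mspan n m A \<Longrightarrow> u \<in> carrier_mat n m"
proof -
  assume A: "A \<subseteq> carrier_mat n m" and "u \<in> mspan n m A"
  from \<open>u \<in> mspan n m A\<close> show ?thesis by (induction rule: mspan.induct) (use A in auto)
qed

lemma mspan_smult_closed: assumes A: "A \<subseteq> carrier_mat n m" shows "u \<in> mspan n m A \<Longrightarrow> c \<cdot>\<^sub>m u \<in> mspan n m A"
proof (induction rule: mspan.induct)
  case zero
  have "c \<cdot>\<^sub>m (0\<^sub>m n m :: complex mat) = 0\<^sub>m n m" by (rule eq_matI) auto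
  then show ?case by (simp add: mspan.zero)
next
  case (smult a d)
  have "c \<cdot>\<^sub>m (d \<cdot>\<^sub>m a) = (c*d) \<cdot>\<^sub>m a" by (rule eq_matI) auto
  then show ?case using smult by (simp add: mspan.smult)
next
  case (add u v)
  have "c \<cdot>\<^sub>m (u + v) = c \<cdot>\<^sub>m u + c \<cdot>\<^sub>m v"
    using mspan_carrier[OF A add(1)] mspan_carrier[OF A add(2)] by (intro eq_matI) (auto simp: ring_distribs)
  then show ?case using add by (simp add: mspan.add)
qed

lemma msubspace_mspan: "A \<subseteq> carrier_mat n m \<Longrightarrow> msubspace n m (mspan n m A)"
  unfolding msubspace_def using mspan_carrier[of A n m] mspan_smult_closed[of A n m] by (auto intro: mspan.intros)

lemma mspan_sub: "A \<subseteq> V \<Longrightarrow> msubspace n m V \<Longrightarrow> mspan n m A \<subseteq> V"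
proof
  fix u assume "u \<in> mspan n m A" "A \<subseteq> V" "msubspace n m V"
  then show "u \<in> V" by (induction rule: mspan.induct) (auto simp: msubspace_def)
qed

lemma mspan_inc: "a \<in> A \<Longrightarrow> a \<in> mspan n m A"
  using mspan.smult[of a A 1] by simp

lemma mspan_mono: "A \<subseteq> B \<Longrightarrow> mspan n m A \<subseteq> mspan n m B"
proof
  fix u assume "u \<in> mspan n m A" "A \<subseteq> B"
  then show "u \<in> mspan n m B" by (induction rule: mspan.induct) (auto intro: mspan.intros)
qed

lemma mspan_mult_right:
  assumes u: "u \<in> mspan n k A" and A: "A \<subseteq> carrier_mat n k" and r: "r \<in> carrier_mat k m"
    and W: "msubspace n m W" and gen: "\<And>a. a \<in> A \<Longrightarrow> a * r \<in> W"
  shows "u * r \<in> W"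
  using u
proof (induction rule: mspan.induct)
  case zero
  then show ?case using r W by (simp add: msubspace_def)
next
  case (smult a c)
  have "c \<cdot>\<^sub>m a * r = c \<cdot>\<^sub>m (a * r)" using A smult r by (auto intro: mult_smult_assoc_mat)
  then show ?case using gen[OF smult] W by (simp add: msubspace_def)
next
  case (add u v)
  have "(u + v) * r = u * r + v * r"
    using mspan_carrier[OF A add(1)] mspan_carrier[OF A add(2)] r by (simp add: add_mult_distrib_mat)
  then show ?case using add W by (simp add: msubspace_def)
qed

lemma mspan_mult_left:
  assumes u: "u \<in> mspan k m A" and A: "A \<subseteq> carrier_mat k m" and s: "s \<in> carrier_mat n k"
    and W: "msubspace n m W" and gen: "\<And>a. a \<in> A \<Longrightarrow> s * a \<in> W"
  shows "s * u \<in> W"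
  using u
proof (induction rule: mspan.induct)
  case zero
  then show ?case using s W by (simp add: msubspace_def)
next
  case (smult a c)
  have "s * (c \<cdot>\<^sub>m a) = c \<cdot>\<^sub>m (s * a)" using A smult s by (auto intro: mult_smult_distrib)
  then show ?case using gen[OF smult] W by (simp add: msubspace_def)
next
  case (add u v)
  have "s * (u + v) = s * u + s * v"
    using mspan_carrier[OF A add(1)] mspan_carrier[OF A add(2)] s by (simp add: mult_add_distrib_mat)
  then show ?case using add W by (simp add: msubspace_def)
qed

lemma qrel_sub: "is_qrel X Y R \<Longrightarrow> x \<in> At X \<Longrightarrow> y \<in> At Y \<Longrightarrow> msubspace (qdim Y y) (qdim X x) (R x y)"
  by (simp add: is_qrel_def)

lemma qrel_carrier: "is_qrel X Y R \<Longrightarrow> x \<in> At X \<Longrightarrow> y \<in> At Y \<Longrightarrow> r \<in> R x y \<Longrightarrow> r \<in> carrier_mat (qdim Y y) (qdim X x)"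
  unfolding is_qrel_def msubspace_def by blast

lemma qcomp_gen: "y \<in> At Y \<Longrightarrow> r \<in> R x y \<Longrightarrow> s \<in> S y z \<Longrightarrow> s * r \<in> qcomp X Y Z S R x z"
  unfolding qcomp_def by (rule mspan_inc) blast

lemma qcomp_gens_carrier: "is_qrel X Y R \<Longrightarrow> is_qrel Y Z S \<Longrightarrow> x \<in> At X \<Longrightarrow> z \<in> At Z \<Longrightarrow>
   {s * r | s r y. y \<in> At Y \<and> r \<in> R x y \<and> s \<in> S y z} \<subseteq> carrier_mat (qdim Z z) (qdim X x)"
  using qrel_carrier[of X Y R] qrel_carrier[of Y Z S] by fastforce

lemma is_qrel_qcomp: "is_qrel X Y R \<Longrightarrow> is_qrel Y Z S \<Longrightarrow> is_qrel X Z (qcomp X Y Z S R)"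
  unfolding is_qrel_def[of X Z]
proof (intro ballI)
  fix x z assume "is_qrel X Y R" "is_qrel Y Z S" "x \<in> At X" "z \<in> At Z"
  then show "msubspace (qdim Z z) (qdim X x) (qcomp X Y Z S R x z)"
    unfolding qcomp_def by (rule msubspace_mspan[OF qcomp_gens_carrier])
qed

lemma qcomp_le_sub:
  assumes "msubspace (qdim Z z) (qdim X x) W"
    and "\<And>y r s. y \<in> At Y \<Longrightarrow> r \<in> R x y \<Longrightarrow> s \<in> S y z \<Longrightarrow> s * r \<in> W"
  shows "qcomp X Y Z S R x z \<subseteq> W"
  unfolding qcomp_def by (rule mspan_sub) (use assms in auto)

lemma qcomp_elem:
  "is_qrel X Y R \<Longrightarrow> is_qrel Y Z S \<Longrightarrow> x \<in> At X \<Longrightarrow> z \<in> At Z \<Longrightarrow> u \<in> qcomp X Y Z S R x z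
   \<Longrightarrow> u \<in> mspan (qdim Z z) (qdim X x) {s * r | s r y. y \<in> At Y \<and> r \<in> R x y \<and> s \<in> S y z}"
  by (simp add: qcomp_def)

lemma qle_trans [trans]: "qle X Y A B \<Longrightarrow> qle X Y B C \<Longrightarrow> qle X Y A C"
  unfolding qle_def by blast

lemma qle_refl: "qle X Y A A"
  unfolding qle_def by blast

lemma qcomp_mono: "qle X Y R R' \<Longrightarrow> qle Y Z S S' \<Longrightarrow> qle X Z (qcomp X Y Z S R) (qcomp X Y Z S' R')"
  unfolding qle_def qcomp_def by (intro ballI mspan_mono) blast

lemma qcomp_assoc1:
  assumes R: "is_qrel X Y R" and S: "is_qrel Y Z S" and T: "is_qrel Z W T"
  shows "qle X W (qcomp X Y W (qcomp Y Z W T S) R) (qcomp X Z W T (qcomp X Y Z S R))"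
  unfolding qle_def
proof (intro ballI)
  fix x w assume x: "x \<in> At X" and w: "w \<in> At W"
  have SR: "is_qrel X Z (qcomp X Y Z S R)" using R S by (rule is_qrel_qcomp)
  have Wsub: "msubspace (qdim W w) (qdim X x) (qcomp X Z W T (qcomp X Y Z S R) x w)"
    using qrel_sub[OF is_qrel_qcomp[OF SR T] x w] .
  show "qcomp X Y W (qcomp Y Z W T S) R x w \<subseteq> qcomp X Z W T (qcomp X Y Z S R) x w"
  proof (rule qcomp_le_sub[OF Wsub])
    fix y r u assume y: "y \<in> At Y" and r: "r \<in> R x y" and u: "u \<in> qcomp Y Z W T S y w"
    show "u * r \<in> qcomp X Z W T (qcomp X Y Z S R) x w"
    proof (rule mspan_mult_right[OF qcomp_elem[OF S T y w u] qcomp_gens_carrier[OF S T y w] _ Wsub])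
      show "r \<in> carrier_mat (qdim Y y) (qdim X x)" using qrel_carrier[OF R x y r] .
      fix a assume "a \<in> {t * s | t s z. z \<in> At Z \<and> s \<in> S y z \<and> t \<in> T z w}"
      then obtain t s z where a: "a = t * s" and z: "z \<in> At Z" and s: "s \<in> S y z" and t: "t \<in> T z w" by blast
      have eq: "a * r = t * (s * r)"
        unfolding a by (rule assoc_mult_mat[OF qrel_carrier[OF T z w t] qrel_carrier[OF S y z s] qrel_carrier[OF R x y r]])
      show "a * r \<in> qcomp X Z W T (qcomp X Y Z S R) x w"
        unfolding eq using qcomp_gen[where R="qcomp X Y Z S R" and S=T and x=x and z=w, OF z qcomp_gen[where R=R and S=S and x=x and z=z, OF y r s] t] .
    qed
  qed
qed

lemma qcomp_assoc2:
  assumes R: "is_qrel X Y R" and S: "is_qrel Y Z S" and T: "is_qrel Z W T"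
  shows "qle X W (qcomp X Z W T (qcomp X Y Z S R)) (qcomp X Y W (qcomp Y Z W T S) R)"
  unfolding qle_def
proof (intro ballI)
  fix x w assume x: "x \<in> At X" and w: "w \<in> At W"
  have TS: "is_qrel Y W (qcomp Y Z W T S)" using S T by (rule is_qrel_qcomp)
  have SR: "is_qrel X Z (qcomp X Y Z S R)" using R S by (rule is_qrel_qcomp)
  have Wsub: "msubspace (qdim W w) (qdim X x) (qcomp X Y W (qcomp Y Z W T S) R x w)"
    using qrel_sub[OF is_qrel_qcomp[OF R TS] x w] .
  show "qcomp X Z W T (qcomp X Y Z S R) x w \<subseteq> qcomp X Y W (qcomp Y Z W T S) R x w"
  proof (rule qcomp_le_sub[OF Wsub])
    fix z u t assume z: "z \<in> At Z" and u: "u \<in> qcomp X Y Z S R x z" and t: "t \<in> T z w"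
    show "t * u \<in> qcomp X Y W (qcomp Y Z W T S) R x w"
    proof (rule mspan_mult_left[OF qcomp_elem[OF R S x z u] qcomp_gens_carrier[OF R S x z] _ Wsub])
      show "t \<in> carrier_mat (qdim W w) (qdim Z z)" using qrel_carrier[OF T z w t] .
      fix a assume "a \<in> {s * r | s r y. y \<in> At Y \<and> r \<in> R x y \<and> s \<in> S y z}"
      then obtain s r y where a: "a = s * r" and y: "y \<in> At Y" and r: "r \<in> R x y" and s: "s \<in> S y z" by blast
      have eq: "t * a = (t * s) * r"
        unfolding a by (rule assoc_mult_mat[OF qrel_carrier[OF T z w t] qrel_carrier[OF S y z s] qrel_carrier[OF R x y r], symmetric])
      show "t * a \<in> qcomp X Y W (qcomp Y Z W T S) R x w"
        unfolding eq using qcomp_gen[where R=R and S="qcomp Y Z W T S" and x=x and z=w, OF y r qcomp_gen[where R=S and S=T and x=y and z=w, OF z s t]] .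
    qed
  qed
qed

lemma qid_cases: "i \<in> qid X x x' \<Longrightarrow> (x = x' \<and> (\<exists>c. i = c \<cdot>\<^sub>m 1\<^sub>m (qdim X x))) \<or> (x \<noteq> x' \<and> i = 0\<^sub>m (qdim X x') (qdim X x))"
  unfolding qid_def by (auto split: if_splits)

lemma qid_one: "1\<^sub>m (qdim X x) \<in> qid X x x"
  unfolding qid_def using smult_one_gen[of "1\<^sub>m (qdim X x)"] by (auto intro!: exI[of _ 1])

lemma qcomp_id_right: assumes R: "is_qrel X Y R" shows "qle X Y (qcomp X X Y R (qid X)) R"
  unfolding qle_def
proof (intro ballI)
  fix x y assume x: "x \<in> At X" and y: "y \<in> At Y"
  show "qcomp X X Y R (qid X) x y \<subseteq> R x y"
  proof (rule qcomp_le_sub[OF qrel_sub[OF R x y]])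
    fix x' i r assume x': "x' \<in> At X" and i: "i \<in> qid X x x'" and r: "r \<in> R x' y"
    have sub: "msubspace (qdim Y y) (qdim X x) (R x y)" using qrel_sub[OF R x y] .
    from qid_cases[OF i] show "r * i \<in> R x y"
    proof
      assume "x = x' \<and> (\<exists>c. i = c \<cdot>\<^sub>m 1\<^sub>m (qdim X x))"
      then obtain c where e: "x' = x" "i = c \<cdot>\<^sub>m 1\<^sub>m (qdim X x)" by auto
      have rc: "r \<in> carrier_mat (qdim Y y) (qdim X x)" using qrel_carrier[OF R x y] r e by simp
      have "r * i = c \<cdot>\<^sub>m r" unfolding e using mult_smult_distrib[OF rc one_carrier_mat, of c] rc by simp
      then show ?thesis using sub r e by (simp add: msubspace_def)
    next
      assume "x \<noteq> x' \<and> i = 0\<^sub>m (qdim X x') (qdim X x)"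
      then have e: "i = 0\<^sub>m (qdim X x') (qdim X x)" by auto
      have rc: "r \<in> carrier_mat (qdim Y y) (qdim X x')" using qrel_carrier[OF R x' y r] .
      have "r * i = 0\<^sub>m (qdim Y y) (qdim X x)" unfolding e using rc by simp
      then show ?thesis using sub by (simp add: msubspace_def)
    qed
  qed
qed

lemma qcomp_id_left: assumes R: "is_qrel X Y R" shows "qle X Y (qcomp X Y Y (qid Y) R) R"
  unfolding qle_def
proof (intro ballI)
  fix x y assume x: "x \<in> At X" and y: "y \<in> At Y"
  show "qcomp X Y Y (qid Y) R x y \<subseteq> R x y"
  proof (rule qcomp_le_sub[OF qrel_sub[OF R x y]])
    fix y' r i assume y': "y' \<in> At Y" and r: "r \<in> R x y'" and i: "i \<in> qid Y y' y"
    have sub: "msubspace (qdim Y y) (qdim X x) (R x y)" using qrel_sub[OF R x y] .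
    from qid_cases[OF i] show "i * r \<in> R x y"
    proof
      assume "y' = y \<and> (\<exists>c. i = c \<cdot>\<^sub>m 1\<^sub>m (qdim Y y'))"
      then obtain c where e: "y' = y" "i = c \<cdot>\<^sub>m 1\<^sub>m (qdim Y y)" by auto
      have rc: "r \<in> carrier_mat (qdim Y y) (qdim X x)" using qrel_carrier[OF R x y] r e by simp
      have "i * r = c \<cdot>\<^sub>m r" unfolding e using mult_smult_assoc_mat[OF one_carrier_mat rc, of c] rc by simp
      then show ?thesis using sub r e by (simp add: msubspace_def)
    next
      assume "y' \<noteq> y \<and> i = 0\<^sub>m (qdim Y y) (qdim Y y')"
      then have e: "i = 0\<^sub>m (qdim Y y) (qdim Y y')" by auto
      have rc: "r \<in> carrier_mat (qdim Y y') (qdim X x)" using qrel_carrier[OF R x y' r] .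
      have "i * r = 0\<^sub>m (qdim Y y) (qdim X x)" unfolding e using rc by simp
      then show ?thesis using sub by (simp add: msubspace_def)
    qed
  qed
qed

lemma qcomp_id_left2: assumes R: "is_qrel X Y R" shows "qle X Y R (qcomp X Y Y (qid Y) R)"
  unfolding qle_def
proof (intro ballI subsetI)
  fix x y r assume x: "x \<in> At X" and y: "y \<in> At Y" and r: "r \<in> R x y"
  have "1\<^sub>m (qdim Y y) * r = r" using qrel_carrier[OF R x y r] by simp
  then show "r \<in> qcomp X Y Y (qid Y) R x y"
    using qcomp_gen[where R=R and S="qid Y" and x=x and z=y, OF y r qid_one] by simp
qed

lemma qcomp_id_right2: assumes R: "is_qrel X Y R" shows "qle X Y R (qcomp X X Y R (qid X))"
  unfolding qle_def
proof (intro ballI subsetI)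
  fix x y r assume x: "x \<in> At X" and y: "y \<in> At Y" and r: "r \<in> R x y"
  have "r * 1\<^sub>m (qdim X x) = r" using qrel_carrier[OF R x y r] by simp
  then show "r \<in> qcomp X X Y R (qid X) x y"
    using qcomp_gen[where R="qid X" and S=R and x=x and z=y, OF x qid_one r] by simp
qed

lemma msubspace_adj: assumes sub: "msubspace n m V" shows "msubspace m n (mat_adjoint ` V)"
proof -
  have car: "V \<subseteq> carrier_mat n m" using sub by (simp add: msubspace_def)
  have 1: "mat_adjoint ` V \<subseteq> carrier_mat m n" using car adj_carrier by blast
  have 2: "0\<^sub>m m n \<in> mat_adjoint ` V"
    using sub adj_zero[of n m] unfolding msubspace_def by (metis image_eqI)
  have 3: "u + v \<in> mat_adjoint ` V" if "u \<in> mat_adjoint ` V" "v \<in> mat_adjoint ` V" for u v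
  proof -
    from that(1) obtain a where a: "a \<in> V" "u = mat_adjoint a" by (rule imageE) simp
    from that(2) obtain b where b: "b \<in> V" "v = mat_adjoint b" by (rule imageE) simp
    have ac: "a \<in> carrier_mat n m" "b \<in> carrier_mat n m" using a b car by auto
    have "u + v = mat_adjoint (a + b)" using a(2) b(2) adj_add[OF ac] by simp
    moreover have "a + b \<in> V" using a b sub by (simp add: msubspace_def)
    ultimately show ?thesis by simp
  qed
  have 4: "c \<cdot>\<^sub>m u \<in> mat_adjoint ` V" if "u \<in> mat_adjoint ` V" for u c
  proof -
    from that obtain a where a: "a \<in> V" "u = mat_adjoint a" by (rule imageE) simp
    have "c \<cdot>\<^sub>m u = mat_adjoint (conjugate c \<cdot>\<^sub>m a)" using a by (simp add: adj_smult)
    moreover have "conjugate c \<cdot>\<^sub>m a \<in> V" using a sub by (simp add: msubspace_def)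
    ultimately show ?thesis by simp
  qed
  show ?thesis unfolding msubspace_def using 1 2 3 4 by blast
qed

lemma is_qrel_qadj: assumes R: "is_qrel X Y R" shows "is_qrel Y X (qadj R)"
  unfolding is_qrel_def qadj_def using msubspace_adj qrel_sub[OF R] by blast

lemma qadj_mono: "qle X Y R R' \<Longrightarrow> qle Y X (qadj R) (qadj R')"
  unfolding qle_def qadj_def by blast

lemma qadj_qadj: "qle X Y R (qadj (qadj R))"
  unfolding qle_def qadj_def by (simp add: image_image)

lemma qadj_comp:
  assumes R: "is_qrel X Y R" and S: "is_qrel Y Z S"
  shows "qle Z X (qcomp Z Y X (qadj R) (qadj S)) (qadj (qcomp X Y Z S R))"
  unfolding qle_def
proof (intro ballI)
  fix z x assume z: "z \<in> At Z" and x: "x \<in> At X"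
  have W: "msubspace (qdim X x) (qdim Z z) (qadj (qcomp X Y Z S R) z x)"
    using qrel_sub[OF is_qrel_qadj[OF is_qrel_qcomp[OF R S]] z x] .
  show "qcomp Z Y X (qadj R) (qadj S) z x \<subseteq> qadj (qcomp X Y Z S R) z x"
  proof (rule qcomp_le_sub[OF W])
    fix y s' r' assume y: "y \<in> At Y" and s': "s' \<in> qadj S z y" and r': "r' \<in> qadj R y x"
    obtain s where s: "s \<in> S y z" "s' = mat_adjoint s" using s' unfolding qadj_def by auto
    obtain r where r: "r \<in> R x y" "r' = mat_adjoint r" using r' unfolding qadj_def by auto
    have "r' * s' = mat_adjoint (s * r)"
      using adj_mult[OF qrel_carrier[OF S y z s(1)] qrel_carrier[OF R x y r(1)]] r s by simp
    moreover have "s * r \<in> qcomp X Y Z S R x z"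
      using qcomp_gen[where R=R and S=S and x=x and z=z, OF y r(1) s(1)] .
    ultimately show "r' * s' \<in> qadj (qcomp X Y Z S R) z x" unfolding qadj_def by simp
  qed
qed

lemma qle_meet: "qle X Y A B \<Longrightarrow> qle X Y A C \<Longrightarrow> qle X Y A (qmeet B C)"
  unfolding qle_def qmeet_def by blast

lemma antisym_half:
  assumes S: "is_qrel Y Y S" and meet: "qle Y Y (qmeet S (qadj S)) (qid Y)"
    and F: "qfun X Y F" and G: "qfun X Y G"
    and GF: "qle X Y G (qcomp X Y Y S F)" and FG: "qle X Y F (qcomp X Y Y S G)"
  shows "qle X Y G F"
proof -
  have Fr: "is_qrel X Y F" and Gr: "is_qrel X Y G" using F G by (auto simp: qfun_def)
  have FFa: "qle Y Y (qcomp Y X Y F (qadj F)) (qid Y)" and FaF: "qle X X (qid X) (qcomp X Y X (qadj F) F)"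
    using F by (auto simp: qfun_def)
  have GGa: "qle Y Y (qcomp Y X Y G (qadj G)) (qid Y)"
    using G by (auto simp: qfun_def)
  have Fa: "is_qrel Y X (qadj F)" using is_qrel_qadj[OF Fr] .
  have Ga: "is_qrel Y X (qadj G)" using is_qrel_qadj[OF Gr] .
  have c1: "qle Y Y (qcomp Y X Y G (qadj F)) S"
  proof -
    have "qle Y Y (qcomp Y X Y G (qadj F)) (qcomp Y X Y (qcomp X Y Y S F) (qadj F))"
      by (rule qcomp_mono[OF qle_refl GF])
    also have "qle Y Y \<dots> (qcomp Y Y Y S (qcomp Y X Y F (qadj F)))"
      by (rule qcomp_assoc1[OF Fa Fr S])
    also have "qle Y Y \<dots> (qcomp Y Y Y S (qid Y))"
      by (rule qcomp_mono[OF FFa qle_refl])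
    also have "qle Y Y \<dots> S" by (rule qcomp_id_right[OF S])
    finally show ?thesis .
  qed
  have c2: "qle Y Y (qcomp Y X Y F (qadj G)) S"
  proof -
    have "qle Y Y (qcomp Y X Y F (qadj G)) (qcomp Y X Y (qcomp X Y Y S G) (qadj G))"
      by (rule qcomp_mono[OF qle_refl FG])
    also have "qle Y Y \<dots> (qcomp Y Y Y S (qcomp Y X Y G (qadj G)))"
      by (rule qcomp_assoc1[OF Ga Gr S])
    also have "qle Y Y \<dots> (qcomp Y Y Y S (qid Y))"
      by (rule qcomp_mono[OF GGa qle_refl])
    also have "qle Y Y \<dots> S" by (rule qcomp_id_right[OF S])
    finally show ?thesis .
  qed
  have c3: "qle Y Y (qcomp Y X Y G (qadj F)) (qadj S)"
  proof -
    have "qle Y Y (qcomp Y X Y G (qadj F)) (qcomp Y X Y (qadj (qadj G)) (qadj F))"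
      by (rule qcomp_mono[OF qle_refl qadj_qadj])
    also have "qle Y Y \<dots> (qadj (qcomp Y X Y F (qadj G)))"
      by (rule qadj_comp[OF Ga Fr])
    also have "qle Y Y \<dots> (qadj S)" by (rule qadj_mono[OF c2])
    finally show ?thesis .
  qed
  have c4: "qle Y Y (qcomp Y X Y G (qadj F)) (qid Y)"
    using qle_trans[OF qle_meet[OF c1 c3] meet] .
  have "qle X Y G (qcomp X X Y G (qid X))" by (rule qcomp_id_right2[OF Gr])
  also have "qle X Y \<dots> (qcomp X X Y G (qcomp X Y X (qadj F) F))"
    by (rule qcomp_mono[OF FaF qle_refl])
  also have "qle X Y \<dots> (qcomp X Y Y (qcomp Y X Y G (qadj F)) F)"
    by (rule qcomp_assoc2[OF Fr Fa Gr])
  also have "qle X Y \<dots> (qcomp X Y Y (qid Y) F)"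
    by (rule qcomp_mono[OF qle_refl c4])
  also have "qle X Y \<dots> F" by (rule qcomp_id_left[OF Fr])
  finally show ?thesis .
qed

theorem mainTheorem2:
  fixes X :: "'x qset" and Y :: "'y qset" and Z :: "'z qset"
    and R :: "('x,'x) qrel" and S :: "('y,'y) qrel" and T :: "('z,'z) qrel"
  assumes PX: "qposet X R" and PY: "qposet Y S" and PZ: "qposet Z T"
  shows "(\<forall>F. qmono X R Y S F \<longrightarrow> qhom_le X Y S F F)
    \<and> (\<forall>F G H. qmono X R Y S F \<longrightarrow> qmono X R Y S G \<longrightarrow> qmono X R Y S H \<longrightarrow>
          qhom_le X Y S F G \<longrightarrow> qhom_le X Y S G H \<longrightarrow> qhom_le X Y S F H)
    \<and> (\<forall>F G. qmono X R Y S F \<longrightarrow> qmono X R Y S G \<longrightarrow>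
          qhom_le X Y S F G \<longrightarrow> qhom_le X Y S G F \<longrightarrow> qeq X Y F G)
    \<and> (\<forall>F F' G G'. qmono X R Y S F \<longrightarrow> qmono X R Y S F' \<longrightarrow>
          qmono Y S Z T G \<longrightarrow> qmono Y S Z T G' \<longrightarrow>
          qhom_le X Y S F F' \<longrightarrow> qhom_le Y Z T G G' \<longrightarrow>
          qhom_le X Z T (qcomp X Y Z G F) (qcomp X Y Z G' F'))"
proof (intro conjI allI impI)
  have Sr: "is_qrel Y Y S" and IS: "qle Y Y (qid Y) S" and SS: "qle Y Y (qcomp Y Y Y S S) S"
    and Smeet: "qle Y Y (qmeet S (qadj S)) (qid Y)"
    using PY by (auto simp: qposet_def)
  have Tr: "is_qrel Z Z T" and TT: "qle Z Z (qcomp Z Z Z T T) T"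
    using PZ by (auto simp: qposet_def)
  have monoD: "\<And>A B P Q H. qmono A P B Q H \<Longrightarrow> is_qrel A B H"
    by (auto simp: qmono_def qfun_def)
  {
    fix F assume F: "qmono X R Y S F"
    have Fr: "is_qrel X Y F" using monoD[OF F] .
    have "qle X Y F (qcomp X Y Y (qid Y) F)" by (rule qcomp_id_left2[OF Fr])
    also have "qle X Y \<dots> (qcomp X Y Y S F)" by (rule qcomp_mono[OF qle_refl IS])
    finally show "qhom_le X Y S F F" unfolding qhom_le_def .
  }
  {
    fix F G H assume F: "qmono X R Y S F" and G: "qmono X R Y S G" and H: "qmono X R Y S H"
      and FG: "qhom_le X Y S F G" and GH: "qhom_le X Y S G H"
    have Fr: "is_qrel X Y F" using monoD[OF F] .
    have "qle X Y H (qcomp X Y Y S G)" using GH unfolding qhom_le_def .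
    also have "qle X Y \<dots> (qcomp X Y Y S (qcomp X Y Y S F))"
      by (rule qcomp_mono[OF _ qle_refl]) (use FG in \<open>simp add: qhom_le_def\<close>)
    also have "qle X Y \<dots> (qcomp X Y Y (qcomp Y Y Y S S) F)"
      by (rule qcomp_assoc2[OF Fr Sr Sr])
    also have "qle X Y \<dots> (qcomp X Y Y S F)" by (rule qcomp_mono[OF qle_refl SS])
    finally show "qhom_le X Y S F H" unfolding qhom_le_def .
  }
  {
    fix F G assume F: "qmono X R Y S F" and G: "qmono X R Y S G"
      and FG: "qhom_le X Y S F G" and GF: "qhom_le X Y S G F"
    have Ff: "qfun X Y F" and Gf: "qfun X Y G" using F G by (auto simp: qmono_def)
    have "qle X Y G F" using antisym_half[OF Sr Smeet Ff Gf] FG GF by (simp add: qhom_le_def)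
    moreover have "qle X Y F G" using antisym_half[OF Sr Smeet Gf Ff] FG GF by (simp add: qhom_le_def)
    ultimately show "qeq X Y F G" unfolding qle_def qeq_def by blast
  }
  {
    fix F F' G G' assume F: "qmono X R Y S F" and F': "qmono X R Y S F'"
      and G: "qmono Y S Z T G" and G': "qmono Y S Z T G'"
      and FF: "qhom_le X Y S F F'" and GG: "qhom_le Y Z T G G'"
    have Fr: "is_qrel X Y F" using monoD[OF F] .
    have Gr: "is_qrel Y Z G" using monoD[OF G] .
    have SF: "is_qrel X Y (qcomp X Y Y S F)" using is_qrel_qcomp[OF Fr Sr] .
    have GF: "is_qrel X Z (qcomp X Y Z G F)" using is_qrel_qcomp[OF Fr Gr] .
    have GS: "qle Y Z (qcomp Y Y Z G S) (qcomp Y Z Z T G)" using G by (simp add: qmono_def)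
    have "qle X Z (qcomp X Y Z G' F') (qcomp X Y Z (qcomp Y Z Z T G) (qcomp X Y Y S F))"
      by (rule qcomp_mono) (use FF GG in \<open>simp_all add: qhom_le_def\<close>)
    also have "qle X Z \<dots> (qcomp X Z Z T (qcomp X Y Z G (qcomp X Y Y S F)))"
      by (rule qcomp_assoc1[OF SF Gr Tr])
    also have "qle X Z \<dots> (qcomp X Z Z T (qcomp X Y Z (qcomp Y Y Z G S) F))"
      by (rule qcomp_mono[OF qcomp_assoc2[OF Fr Sr Gr] qle_refl])
    also have "qle X Z \<dots> (qcomp X Z Z T (qcomp X Y Z (qcomp Y Z Z T G) F))"
      by (rule qcomp_mono[OF qcomp_mono[OF qle_refl GS] qle_refl])
    also have "qle X Z \<dots> (qcomp X Z Z T (qcomp X Z Z T (qcomp X Y Z G F)))"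
      by (rule qcomp_mono[OF qcomp_assoc1[OF Fr Gr Tr] qle_refl])
    also have "qle X Z \<dots> (qcomp X Z Z (qcomp Z Z Z T T) (qcomp X Y Z G F))"
      by (rule qcomp_assoc2[OF GF Tr Tr])
    also have "qle X Z \<dots> (qcomp X Z Z T (qcomp X Y Z G F))"
      by (rule qcomp_mono[OF qle_refl TT])
    finally show "qhom_le X Z T (qcomp X Y Z G F) (qcomp X Y Z G' F')" unfolding qhom_le_def .
  }
qed

end
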